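(* Let $U_2>0$ and constants $k_1,k_2$ with $k_1>k_2-1>0$. Consider the system $$\dot e_\psi=e_r,\qquad \dot e_r=-e_r-U_2\,\sigma\!\left(\frac{k_1}{U_2}e_\psi+\frac{k_2-1}{U_2}e_r\right),$$ where $\sigma(t)=\frac{t}{\max(1,|t|)}$. Then for every solution, after a sufficiently large (finite) time the saturation operates in its linear region, i.e. $\left|\frac{k_1}{U_2}e_\psi+\frac{k_2-1}{U_2}e_r\right|\le 1$, and $(e_\psi,e_r)$ converges exponentially to zero. *)

theory Defs
  imports "HOL-Analysis.Analysis"
begin

definition sat :: "real \<Rightarrow> real" where
  "sat t = t / max 1 \<bar>t\<bar>"

end

theory Submission
  imports Defs
begin

definition Fq :: "real \<Rightarrow> real" where
  "Fq w = (if \<bar>w\<bar> \<le> 1 then w^2/2 else \<bar>w\<bar> - 1/2)"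

lemma deriv_split:
  fixes f :: "real \<Rightarrow> real"
  assumes "(f has_field_derivative D) (at x within {..x})"
    and "(f has_field_derivative D) (at x within {x..})"
  shows "(f has_field_derivative D) (at x)"
proof -
  have e: "at x = sup (at x within {..x}) (at x within {x..})"
  proof -
    have "{..x} \<union> {x..} = (UNIV::real set)" by auto
    then show ?thesis by (metis at_within_union)
  qed
  have "((\<lambda>y. (f y - f x) / (y - x)) \<longlongrightarrow> D) (at x)"
    unfolding e using assms unfolding has_field_derivative_iff by (rule filterlim_sup)
  then show ?thesis using has_field_derivative_iff[of f D x UNIV] by simp
qed

lemma Fq_deriv: "(Fq has_field_derivative sat w) (at w)"
proof -
  consider "\<bar>w\<bar> < 1" | "w > 1" | "w < -1" | "w = 1" | "w = -1" by linarith
  then show ?thesis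
  proof cases
    case 1
    have "((\<lambda>w. w^2/2) has_field_derivative w) (at w)"
      by (auto intro!: derivative_eq_intros)
    then have "(Fq has_field_derivative w) (at w)"
      by (rule has_field_derivative_transform_within_open[where S="{-1<..<1}"])
         (use 1 in \<open>auto simp: Fq_def\<close>)
    then show ?thesis using 1 by (simp add: sat_def)
  next
    case 2
    have "((\<lambda>w. w - 1/2) has_field_derivative 1) (at w)"
      by (auto intro!: derivative_eq_intros)
    then have "(Fq has_field_derivative 1) (at w)"
      by (rule has_field_derivative_transform_within_open[where S="{1<..}"])
         (use 2 in \<open>auto simp: Fq_def\<close>)
    then show ?thesis using 2 by (simp add: sat_def)
  next
    case 3
    have "((\<lambda>w. - w - 1/2) has_field_derivative -1) (at w)"
      by (auto intro!: derivative_eq_intros)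
    then have "(Fq has_field_derivative -1) (at w)"
      by (rule has_field_derivative_transform_within_open[where S="{..<-1}"])
         (use 3 in \<open>auto simp: Fq_def\<close>)
    then show ?thesis using 3 by (simp add: sat_def)
  next
    case 4
    have a: "((\<lambda>w. w^2/2) has_field_derivative 1) (at 1 within {..1})"
      by (auto intro!: derivative_eq_intros)
    have b: "((\<lambda>w. w - 1/2) has_field_derivative 1) (at 1 within {1..})"
      by (auto intro!: derivative_eq_intros)
    have "(Fq has_field_derivative 1) (at 1)"
    proof (rule deriv_split)
      show "(Fq has_field_derivative 1) (at 1 within {..1})"
        by (rule has_field_derivative_transform_within[OF a, where d=1])
           (auto simp: Fq_def dist_real_def)
      show "(Fq has_field_derivative 1) (at 1 within {1..})"
        by (rule has_field_derivative_transform_within[OF b, where d=1])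
           (auto simp: Fq_def dist_real_def)
    qed
    then show ?thesis using 4 by (simp add: sat_def)
  next
    case 5
    have a: "((\<lambda>w. w^2/2) has_field_derivative -1) (at (-1) within {-1..})"
      by (auto intro!: derivative_eq_intros)
    have b: "((\<lambda>w. -w - 1/2) has_field_derivative -1) (at (-1) within {..-1})"
      by (auto intro!: derivative_eq_intros)
    have "(Fq has_field_derivative -1) (at (-1))"
    proof (rule deriv_split)
      show "(Fq has_field_derivative -1) (at (-1) within {-1..})"
        by (rule has_field_derivative_transform_within[OF a, where d=1])
           (auto simp: Fq_def dist_real_def)
      show "(Fq has_field_derivative -1) (at (-1) within {..-1})"
        by (rule has_field_derivative_transform_within[OF b, where d=1])
           (auto simp: Fq_def dist_real_def)
    qed
    then show ?thesis using 5 by (simp add: sat_def)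
  qed
qed

lemma nonincr:
  fixes f f' :: "real \<Rightarrow> real"
  assumes d: "\<And>t. t \<ge> 0 \<Longrightarrow> (f has_real_derivative f' t) (at t within {0..})"
    and n: "\<And>t. t \<ge> 0 \<Longrightarrow> f' t \<le> 0"
    and st: "0 \<le> s" "s \<le> t"
  shows "f t \<le> f s"
proof (cases "s = t")
  case True then show ?thesis by simp
next
  case False
  then have lt: "s < t" using st by simp
  have cont: "continuous_on {s..t} f"
  proof -
    have "continuous_on {0..} f"
      using d DERIV_continuous continuous_on_eq_continuous_within by fastforce
    then show ?thesis by (rule continuous_on_subset) (use st in auto)
  qed
  have dat: "(f has_real_derivative f' x) (at x)" if "0 < x" for x
  proof -
    have "(f has_real_derivative f' x) (at x within {0<..})"
    proof -
      have x0: "0 \<le> x" using that by simp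
      show ?thesis by (rule has_field_derivative_subset[OF d[OF x0]]) auto
    qed
    moreover have "at x within {0<..} = at x" using that by (intro at_within_open) auto
    ultimately show ?thesis by simp
  qed
  obtain l z where z: "s < z" "z < t" "DERIV f z :> l" "f t - f s = (t - s) * l"
  proof -
    have dif: "f differentiable (at x)" if "s < x" "x < t" for x
    proof -
      have "0 < x" using that st by simp
      then show ?thesis using dat[of x] unfolding real_differentiable_def by blast
    qed
    show ?thesis using MVT[OF lt cont dif] that by blast
  qed
  have "l = f' z" using DERIV_unique[OF z(3) dat[of z]] z st by simp
  then have "l \<le> 0" using n[of z] z st by simp
  then have "(t - s) * l \<le> 0" using lt by (intro mult_nonneg_nonpos) auto
  then show ?thesis using z by linarith
qed

lemma quad:
  fixes bt yy p :: real
  assumes "0 \<le> bt" "bt \<le> 1"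
  shows "-(yy^2) - bt*p*yy - bt*p^2 \<le> -(yy^2/2) - bt*p^2/2"
proof -
  have e: "yy^2/2 + bt*p*yy + bt*p^2/2 = (yy + bt*p)^2/2 + bt*(1-bt)*p^2/2"
    by (simp add: power2_eq_square field_simps)
  have "0 \<le> bt*(1-bt)*p^2/2" using assms by simp
  moreover have "0 \<le> (yy + bt*p)^2/2" by simp
  ultimately have "0 \<le> yy^2/2 + bt*p*yy + bt*p^2/2" using e by linarith
  then show ?thesis by (simp add: field_simps)
qed

lemma lin2: "(0::real) \<le> q \<Longrightarrow> 0 \<le> r \<Longrightarrow> v \<le> -(r/2) - q/2 \<Longrightarrow> v \<le> 0"
  by linarith

lemma Fq_nonneg: "Fq w \<ge> 0"
  by (simp add: Fq_def)

lemma sat_lin: "\<bar>w\<bar> \<le> 1 \<Longrightarrow> sat w = w"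
  by (simp add: sat_def max_def)

lemma sat_sq: "\<bar>w\<bar> > 1 \<Longrightarrow> (sat w)^2 = 1"
proof -
  assume h: "\<bar>w\<bar> > 1"
  then have e: "sat w = w / \<bar>w\<bar>" by (simp add: sat_def max_def)
  have nz: "w^2 \<noteq> 0" using h by auto
  show ?thesis unfolding e power_divide power2_abs using nz by simp
qed

lemma Fq_lin: "\<bar>w\<bar> \<le> 1 \<Longrightarrow> Fq w = w^2/2"
  by (simp add: Fq_def)

lemma Fq_sat: "\<bar>w\<bar> > 1 \<Longrightarrow> Fq w = \<bar>w\<bar> - 1/2"
  by (simp add: Fq_def)

lemma Fq_lower:
  assumes "\<bar>w\<bar> \<le> R" "1 \<le> R"
  shows "w^2 / (2*R) \<le> Fq w"
proof (cases "\<bar>w\<bar> \<le> 1")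
  case True
  then have "w^2/(2*R) \<le> w^2/2" using assms by (intro divide_left_mono) auto
  then show ?thesis using True by (simp add: Fq_lin)
next
  case False
  have "w^2 = \<bar>w\<bar> * \<bar>w\<bar>" by (simp add: power2_eq_square)
  also have "\<dots> \<le> \<bar>w\<bar> * R" using assms by (intro mult_left_mono) auto
  finally have "w^2/(2*R) \<le> \<bar>w\<bar>/2" using assms by (simp add: field_simps)
  then show ?thesis using False by (simp add: Fq_sat)
qed


lemma main:
  fixes U a b :: real and x y :: "real \<Rightarrow> real"
  assumes U0: "U > 0" and ab: "a > b" and b0: "b > 0"
    and dx: "\<And>t. t \<ge> 0 \<Longrightarrow> (x has_real_derivative y t) (at t within {0..})"
    and dy: "\<And>t. t \<ge> 0 \<Longrightarrow>
        (y has_real_derivative (- y t - U * sat (a / U * x t + b / U * y t))) (at t within {0..})"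
  shows "(\<exists>T\<ge>0. \<forall>t\<ge>T. \<bar>a / U * x t + b / U * y t\<bar> \<le> 1) \<and>
         (\<exists>C>0. \<exists>r>0. \<forall>t\<ge>0. norm (x t, y t) \<le> C * exp (- r * t))"
proof -
  have a0: "a > 0" using ab b0 by simp
  define z where "z = (\<lambda>t. a / U * x t + b / U * y t)"
  define S where "S = (\<lambda>t. sat (z t))"
  define yd where "yd = (\<lambda>t. - y t - U * S t)"
  define zd where "zd = (\<lambda>t. a / U * y t + b / U * yd t)"
  define V where "V = (\<lambda>t. U^2 / a * Fq (z t) + (y t)^2 / 2)"
  define Vd where "Vd = (\<lambda>t. -((y t)^2) - (b/a) * (U * S t) * y t - (b/a) * (U * S t)^2)"
  have dy': "(y has_real_derivative yd t) (at t within {0..})" if "t \<ge> 0" for t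
    using dy[OF that] by (simp add: yd_def S_def z_def)
  have dz: "(z has_real_derivative zd t) (at t within {0..})" if "t \<ge> 0" for t
    unfolding z_def zd_def
    by (intro DERIV_add DERIV_cmult dx dy' that)
  have dV: "(V has_real_derivative Vd t) (at t within {0..})" if "t \<ge> 0" for t
  proof -
    have h1: "((\<lambda>t. Fq (z t)) has_real_derivative sat (z t) * zd t) (at t within {0..})"
      by (rule DERIV_chain2[OF Fq_deriv dz[OF that]])
    have h2: "((\<lambda>t. y t * y t) has_real_derivative yd t * y t + yd t * y t) (at t within {0..})"
      by (rule DERIV_mult[OF dy'[OF that] dy'[OF that]])
    have h: "((\<lambda>t. U^2 / a * Fq (z t) + y t * y t / 2) has_real_derivative
        U^2 / a * (sat (z t) * zd t) + (yd t * y t + yd t * y t) / 2) (at t within {0..})"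
      by (intro DERIV_add DERIV_cmult DERIV_cdivide h1 h2)
    have e1: "V = (\<lambda>t. U^2 / a * Fq (z t) + y t * y t / 2)"
      by (simp add: V_def power2_eq_square)
    have e2: "U^2 / a * (sat (z t) * zd t) + (yd t * y t + yd t * y t) / 2 = Vd t"
      using U0 a0 by (simp add: Vd_def zd_def yd_def S_def power2_eq_square field_simps)
    show ?thesis using h unfolding e1 e2 .
  qed
  have Fq_nn: "\<And>w. Fq w \<ge> 0" by (rule Fq_nonneg)
  have V_nn: "V t \<ge> 0" for t
    unfolding V_def using Fq_nn[of "z t"] U0 a0 by (intro add_nonneg_nonneg) auto
  have bt: "0 \<le> b/a" "b/a \<le> 1" using a0 b0 ab by auto
  have Vd_quad: "Vd t \<le> -((y t)^2/2) - (b/a) * (U * S t)^2/2" for t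
    unfolding Vd_def by (rule quad[OF bt])
  have Vd_np: "Vd t \<le> 0" for t
  proof -
    have "0 \<le> (b/a) * (U * S t)^2" using bt by (intro mult_nonneg_nonneg) auto
    moreover have "0 \<le> (y t)^2" by simp
    ultimately show ?thesis using Vd_quad[of t] by (rule lin2)
  qed
  have Vmono: "V t \<le> V 0" if "t \<ge> 0" for t
    by (rule nonincr[where f=V and f'=Vd, OF dV Vd_np]) (use that in auto)
  define lam where "lam = min 1 b"
  define c where "c = (b/a) * U^2 / (2 * (V 0 + 1))"
  define \<mu> where "\<mu> = min lam c"
  have lam0: "lam > 0" using b0 by (simp add: lam_def)
  have c0: "c > 0" using b0 a0 U0 V_nn[of 0] by (simp add: c_def)
  have mu0: "\<mu> > 0" using lam0 c0 by (simp add: \<mu>_def)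
  have Vd_mu: "Vd t \<le> - \<mu> * V t" if "t \<ge> 0" for t
  proof (cases "\<bar>z t\<bar> \<le> 1")
    case True
    have Sz: "S t = z t" using True by (simp add: S_def sat_lin)
    have Vt: "V t = U^2 / a * (z t)^2 / 2 + (y t)^2 / 2"
      using True by (simp add: V_def Fq_lin)
    define A where "A = U^2 / a * (z t)^2 / 2"
    define B where "B = (y t)^2 / 2"
    have A0: "A \<ge> 0" using a0 by (simp add: A_def)
    have B0: "B \<ge> 0" by (simp add: B_def)
    have "\<mu> * V t \<le> lam * V t" using V_nn[of t] by (intro mult_right_mono) (auto simp: \<mu>_def)
    also have "\<dots> = lam * A + lam * B" by (simp add: Vt A_def B_def distrib_left)
    also have "\<dots> \<le> b * A + 1 * B"
      using A0 B0 by (intro add_mono mult_right_mono) (auto simp: lam_def)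
    also have "b * A + 1 * B = (y t)^2/2 + (b/a) * (U * S t)^2/2"
      using a0 by (simp add: A_def B_def Sz power_mult_distrib field_simps)
    finally show ?thesis using Vd_quad[of t] by linarith
  next
    case False
    have "(S t)^2 = 1" using False by (simp add: S_def sat_sq)
    then have p: "(U * S t)^2 = U^2" by (simp add: power_mult_distrib)
    have "0 \<le> (y t)^2" by simp
    then have "Vd t \<le> - ((b/a) * U^2)/2" using Vd_quad[of t] unfolding p
      by linarith
    moreover have "\<mu> * V t \<le> c * (V 0 + 1)"
    proof -
      have "\<mu> * V t \<le> c * V t" using V_nn[of t] by (intro mult_right_mono) (auto simp: \<mu>_def)
      also have "\<dots> \<le> c * (V 0 + 1)" using Vmono[OF that] c0 by (intro mult_left_mono) auto
      finally show ?thesis .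
    qed
    moreover have "c * (V 0 + 1) = ((b/a) * U^2)/2"
    proof -
      have nz: "V 0 + 1 \<noteq> 0" using V_nn[of 0] by linarith
      have "c * (V 0 + 1) = ((b/a) * U^2) * ((V 0 + 1) / (2 * (V 0 + 1)))"
        by (simp add: c_def)
      also have "(V 0 + 1) / (2 * (V 0 + 1)) = 1/2" using nz by simp
      finally show ?thesis by simp
    qed
    ultimately show ?thesis by linarith
  qed
  define W where "W = (\<lambda>t. V t * exp (\<mu> * t))"
  have dW: "(W has_real_derivative (Vd t * exp (\<mu> * t) + V t * (exp (\<mu> * t) * \<mu>))) (at t within {0..})"
    if "t \<ge> 0" for t
    unfolding W_def by (auto intro!: derivative_eq_intros dV that)
  have Vexp: "V t \<le> V 0 * exp (- \<mu> * t)" if "t \<ge> 0" for t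
  proof -
    have "W t \<le> W 0"
    proof (rule nonincr[where f=W and f'="\<lambda>t. Vd t * exp (\<mu> * t) + V t * (exp (\<mu> * t) * \<mu>)", OF dW])
      fix s :: real assume "s \<ge> 0"
      then have "Vd s + \<mu> * V s \<le> 0" using Vd_mu[of s] by linarith
      then have "(Vd s + \<mu> * V s) * exp (\<mu> * s) \<le> 0"
        by (simp add: mult_nonpos_nonneg)
      then show "Vd s * exp (\<mu> * s) + V s * (exp (\<mu> * s) * \<mu>) \<le> 0"
        by (simp add: algebra_simps)
    qed (use that in auto)
    then have "V t * exp (\<mu> * t) \<le> V 0" by (simp add: W_def)
    then have "V t * exp (\<mu> * t) * exp (- \<mu> * t) \<le> V 0 * exp (- \<mu> * t)"
      by (intro mult_right_mono) auto
    then show ?thesis by (simp add: mult.assoc exp_add[symmetric])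
  qed
  define L where "L = U^2 / (2 * a)"
  have L0: "L > 0" using U0 a0 by (simp add: L_def)
  have zlin: "\<bar>z t\<bar> \<le> 1" if "V t \<le> L" for t
  proof (rule ccontr)
    assume n: "\<not> \<bar>z t\<bar> \<le> 1"
    then have "Fq (z t) > 1/2" by (simp add: Fq_sat)
    then have "U^2 / a * Fq (z t) > U^2 / a * (1/2)" using U0 a0 by (intro mult_strict_left_mono) auto
    moreover have "U^2 / a * (1/2) = L" by (simp add: L_def)
    moreover have "V t \<ge> U^2 / a * Fq (z t)" by (simp add: V_def)
    ultimately show False using that by linarith
  qed
  have part1: "\<exists>T\<ge>0. \<forall>t\<ge>T. \<bar>a / U * x t + b / U * y t\<bar> \<le> 1"
  proof (intro exI[of _ "V 0 / (\<mu> * L)"] conjI allI impI)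
    show "0 \<le> V 0 / (\<mu> * L)" using V_nn[of 0] mu0 L0 by simp
    fix t assume tT: "V 0 / (\<mu> * L) \<le> t"
    then have t0: "t \<ge> 0" using V_nn[of 0] mu0 L0
      by (meson divide_nonneg_pos mult_pos_pos order_trans)
    have "V 0 \<le> \<mu> * L * t" using tT mu0 L0 by (simp add: divide_le_eq mult.commute)
    then have "V 0 \<le> L * (1 + \<mu> * t)" using L0 by (simp add: algebra_simps)
    also have "\<dots> \<le> L * exp (\<mu> * t)" using L0 exp_ge_add_one_self[of "\<mu> * t"]
      by (intro mult_left_mono) auto
    finally have "V 0 * exp (- \<mu> * t) \<le> L * exp (\<mu> * t) * exp (- \<mu> * t)"
      by (intro mult_right_mono) auto
    then have "V 0 * exp (- \<mu> * t) \<le> L" by (simp add: mult.assoc exp_add[symmetric])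
    then have "V t \<le> L" using Vexp[OF t0] by linarith
    then show "\<bar>a / U * x t + b / U * y t\<bar> \<le> 1" using zlin by (simp add: z_def)
  qed
  define M where "M = a * V 0 / U^2"
  define R where "R = M + 1"
  define K where "K = (4 * a * R + 4 * b^2) / a^2 + 2"
  have R1: "R \<ge> 1" using V_nn[of 0] a0 U0 by (simp add: R_def M_def)
  have normsq: "(x t)^2 + (y t)^2 \<le> K * V t" if t0: "t \<ge> 0" for t
  proof -
    have y2: "0 \<le> (y t)^2 / 2" by simp
    have VV: "V t = U^2 / a * Fq (z t) + (y t)^2 / 2" by (simp add: V_def)
    have "U^2 / a * Fq (z t) \<le> V 0" using Vmono[OF t0] y2 VV by linarith
    then have FM: "Fq (z t) \<le> M" using U0 a0 by (simp add: M_def field_simps)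
    have zR: "\<bar>z t\<bar> \<le> R"
    proof (cases "\<bar>z t\<bar> \<le> 1")
      case True then show ?thesis using R1 by simp
    next
      case False then show ?thesis using FM by (simp add: Fq_sat R_def)
    qed
    have lowF: "(z t)^2 / (2*R) \<le> Fq (z t)" by (rule Fq_lower[OF zR R1])
    have "U^2 / a * ((z t)^2 / (2*R)) \<le> U^2 / a * Fq (z t)" using lowF a0 by (intro mult_left_mono) auto
    then have hh: "U^2 / a * ((z t)^2 / (2*R)) \<le> V t" using y2 VV by linarith
    have "(U * z t)^2 = (2 * a * R) * (U^2 / a * ((z t)^2 / (2*R)))"
      using a0 R1 by (simp add: power_mult_distrib field_simps)
    also have "\<dots> \<le> (2 * a * R) * V t" using hh a0 R1 by (intro mult_left_mono) auto
    finally have h1: "(U * z t)^2 \<le> 2 * a * R * V t" .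
    have "0 \<le> U^2 / a * Fq (z t)" using Fq_nn[of "z t"] a0 by simp
    then have h2: "(y t)^2 \<le> 2 * V t" using VV by linarith
    have xe: "a * x t = U * z t - b * y t" using U0 by (simp add: z_def field_simps)
    have "(a * x t)^2 \<le> 2 * (U * z t)^2 + 2 * (b * y t)^2"
    proof -
      have "2 * (U * z t)^2 + 2 * (b * y t)^2 - (U * z t - b * y t)^2 = (U * z t + b * y t)^2"
        by (simp add: power2_eq_square algebra_simps)
      moreover have "0 \<le> (U * z t + b * y t)^2" by simp
      ultimately show ?thesis unfolding xe by linarith
    qed
    also have "\<dots> \<le> 2 * (2 * a * R * V t) + 2 * (b^2 * (2 * V t))"
    proof -
      have "(b * y t)^2 \<le> b^2 * (2 * V t)" unfolding power_mult_distrib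
        using h2 by (intro mult_left_mono) auto
      then show ?thesis using h1 by linarith
    qed
    finally have "a^2 * (x t)^2 \<le> (4 * a * R + 4 * b^2) * V t"
      by (simp add: power_mult_distrib algebra_simps)
    then have "(x t)^2 \<le> (4 * a * R + 4 * b^2) / a^2 * V t"
      using a0 by (simp add: field_simps)
    then show ?thesis using h2 by (simp add: K_def algebra_simps)
  qed
  define C where "C = sqrt (K * V 0) + 1"
  have K0: "K \<ge> 0" using a0 R1 by (simp add: K_def)
  have sq0: "sqrt (K * V 0) \<ge> 0" using K0 V_nn[of 0] by simp
  have C0: "C > 0" using sq0 unfolding C_def by linarith
  have CC: "K * V 0 \<le> C^2"
  proof -
    have "K * V 0 = (sqrt (K * V 0))^2" using K0 V_nn[of 0] by simp
    also have "\<dots> \<le> C^2" unfolding C_def using sq0 by (intro power_mono) auto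
    finally show ?thesis .
  qed
  have part2: "\<exists>C>0. \<exists>r>0. \<forall>t\<ge>0. norm (x t, y t) \<le> C * exp (- r * t)"
  proof -
  have "\<forall>t\<ge>0. norm (x t, y t) \<le> C * exp (- (\<mu>/2) * t)"
  proof (intro allI impI)
    fix t :: real assume t0: "t \<ge> 0"
    have "(norm (x t, y t))^2 = (x t)^2 + (y t)^2" by (simp add: norm_Pair)
    also have "\<dots> \<le> K * V t" by (rule normsq[OF t0])
    also have "\<dots> \<le> K * (V 0 * exp (- \<mu> * t))" using Vexp[OF t0] K0 by (intro mult_left_mono)
    also have "\<dots> = (K * V 0) * exp (- \<mu> * t)" by simp
    also have "\<dots> \<le> C^2 * exp (- \<mu> * t)" using CC by (intro mult_right_mono) auto
    also have "\<dots> = (C * exp (- (\<mu>/2) * t))^2"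
      by (simp add: power_mult_distrib power2_eq_square exp_add[symmetric])
    finally show "norm (x t, y t) \<le> C * exp (- (\<mu>/2) * t)"
      by (rule power2_le_imp_le) (use C0 in simp)
  qed
  moreover have "\<mu>/2 > 0" using mu0 by simp
  ultimately show ?thesis using C0 by blast
  qed
  show ?thesis using part1 part2 by blast
qed

theorem lemma2:
  fixes U2 k1 k2 :: real and epsi er :: "real \<Rightarrow> real"
  assumes U2: "U2 > 0"
    and gains: "k1 > k2 - 1" "k2 - 1 > 0"
    and ode_psi: "\<And>t. t \<ge> 0 \<Longrightarrow> (epsi has_real_derivative er t) (at t within {0..})"
    and ode_r: "\<And>t. t \<ge> 0 \<Longrightarrow>
        (er has_real_derivative (- er t - U2 * sat (k1 / U2 * epsi t + (k2 - 1) / U2 * er t)))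
          (at t within {0..})"
  shows "(\<exists>T\<ge>0. \<forall>t\<ge>T. \<bar>k1 / U2 * epsi t + (k2 - 1) / U2 * er t\<bar> \<le> 1) \<and>
         (\<exists>C>0. \<exists>r>0. \<forall>t\<ge>0. norm (epsi t, er t) \<le> C * exp (- r * t))"
  by (rule main[where U=U2 and a=k1 and b="k2 - 1" and x=epsi and y=er, OF U2 gains ode_psi ode_r])

end
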